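(* Under the standing assumptions below, there exists a unique constant $\eta\in(0,1)$ such that for every $\mathbf v\in\mathbb R_0^{N}$, $$\eta\, \mathrm{d}I_1(\mathbf v)+(1-\eta)\,\mathrm{d}I_2(\mathbf v)=0 .$$
   Context: Let $\mathcal X=\{1,\dots,N\}$ and $\mathcal Y$ be finite alphabets and $W_1,W_2$ transition probability matrices from $\mathcal X$ to $\mathcal Y$. For a distribution $P$ on $\mathcal X$ let $PW_k(y)=\sum_x P(x)W_k(y|x)$, $I_k(P)=\sum_x P(x)D(W_k(\cdot|x)\|PW_k)$ (mutual information, natural logarithms), $\imath_{P,W_k}(x;y)=\log\frac{W_k(y|x)}{PW_k(y)}$, and $V_k(P)=\sum_x P(x)\,\mathrm{Var}[\imath_{P,W_k}(x;Y_k)]$ where $Y_k\sim W_k(\cdot|x)$. Let $C=\max_P\min_{k\in\{1,2\}}I_k(P)$ and $C_k=\max_P I_k(P)$. Standing assumptions: the maximizer $P^*$ of $P\mapsto\min_k I_k(P)$ is unique; $P^*(x)>0$ for all $x$; $V_k(P^* )>0$ for $k=1,2$; $C_k>C$ for $k=1,2$. Let $P^*_{Y_k}=P^*W_k$, let $\mathbb R_0^N$ be the set of vectors in $\mathbb R^N$ whose entries sum to zero, and for $\mathbf v\in\mathbb R_0^N$ define $\mathrm{d}I_k(\mathbf v)=\sum_{x\in\mathcal X}v_x D(W_k(\cdot|x)\|P^*_{Y_k})$ (the directional derivative of $I_k$ at $P^*$ along $\mathbf v$). *)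

theory Defs
  imports Complex_Main
begin

text \<open>Input alphabet: finite type 'a (plays the role of {1..N});
  output alphabet: finite type 'b. Distributions are functions to real,
  channels are row-stochastic matrices W x y = W(y|x). Natural logs.\<close>

definition is_dist :: "('a::finite \<Rightarrow> real) \<Rightarrow> bool" where
  "is_dist P \<longleftrightarrow> (\<forall>x. 0 \<le> P x) \<and> (\<Sum>x\<in>UNIV. P x) = 1"

definition is_channel :: "('a::finite \<Rightarrow> 'b::finite \<Rightarrow> real) \<Rightarrow> bool" where
  "is_channel W \<longleftrightarrow> (\<forall>x. is_dist (W x))"

definition out_dist :: "('a::finite \<Rightarrow> real) \<Rightarrow> ('a \<Rightarrow> 'b::finite \<Rightarrow> real) \<Rightarrow> 'b \<Rightarrow> real" where
  "out_dist P W y = (\<Sum>x\<in>UNIV. P x * W x y)"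

definition kl_div :: "('b::finite \<Rightarrow> real) \<Rightarrow> ('b \<Rightarrow> real) \<Rightarrow> real" where
  "kl_div p q = (\<Sum>y\<in>{y. 0 < p y}. p y * ln (p y / q y))"

definition mutual_info :: "('a::finite \<Rightarrow> real) \<Rightarrow> ('a \<Rightarrow> 'b::finite \<Rightarrow> real) \<Rightarrow> real" where
  "mutual_info P W = (\<Sum>x\<in>UNIV. P x * kl_div (W x) (out_dist P W))"

definition info_density :: "('a::finite \<Rightarrow> real) \<Rightarrow> ('a \<Rightarrow> 'b::finite \<Rightarrow> real) \<Rightarrow> 'a \<Rightarrow> 'b \<Rightarrow> real" where
  "info_density P W x y = ln (W x y / out_dist P W y)"

definition info_var_cond :: "('a::finite \<Rightarrow> real) \<Rightarrow> ('a \<Rightarrow> 'b::finite \<Rightarrow> real) \<Rightarrow> 'a \<Rightarrow> real" where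
  "info_var_cond P W x =
     (let m = (\<Sum>y\<in>{y. 0 < W x y}. W x y * info_density P W x y)
      in (\<Sum>y\<in>{y. 0 < W x y}. W x y * (info_density P W x y - m)\<^sup>2))"

definition dispersion :: "('a::finite \<Rightarrow> real) \<Rightarrow> ('a \<Rightarrow> 'b::finite \<Rightarrow> real) \<Rightarrow> real" where
  "dispersion P W = (\<Sum>x\<in>UNIV. P x * info_var_cond P W x)"

definition compound_capacity :: "('a::finite \<Rightarrow> 'b::finite \<Rightarrow> real) \<Rightarrow> ('a \<Rightarrow> 'b \<Rightarrow> real) \<Rightarrow> real" where
  "compound_capacity W1 W2 = (SUP P\<in>{P. is_dist P}. min (mutual_info P W1) (mutual_info P W2))"

definition capacity :: "('a::finite \<Rightarrow> 'b::finite \<Rightarrow> real) \<Rightarrow> real" where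
  "capacity W = (SUP P\<in>{P. is_dist P}. mutual_info P W)"

text \<open>Directional derivative dI_k(v) at P*.\<close>
definition dI :: "('a::finite \<Rightarrow> real) \<Rightarrow> ('a \<Rightarrow> 'b::finite \<Rightarrow> real) \<Rightarrow> ('a \<Rightarrow> real) \<Rightarrow> real" where
  "dI Pstar W v = (\<Sum>x\<in>UNIV. v x * kl_div (W x) (out_dist Pstar W))"

end

theory Submission imports Defs begin

lemma out_dist_nonneg:
  assumes "is_channel W" "\<forall>x. 0 \<le> Q x"
  shows "0 \<le> out_dist Q W y"
  using assms unfolding out_dist_def is_channel_def is_dist_def
  by (intro sum_nonneg) (simp add: mult_nonneg_nonneg)

lemma out_dist_ge:
  assumes "is_channel W" "\<forall>x. 0 \<le> Q x"
  shows "Q x * W x y \<le> out_dist Q W y"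
  unfolding out_dist_def
  by (rule member_le_sum[of x UNIV "\<lambda>x. Q x * W x y"])
     (use assms in \<open>auto simp: is_channel_def is_dist_def\<close>)

lemma gibbs_identity:
  assumes ch: "is_channel W" and P: "is_dist P" and Ppos: "\<forall>x. 0 < P x" and Q: "is_dist Q"
  shows "(\<Sum>x\<in>UNIV. Q x * kl_div (W x) (out_dist P W)) - mutual_info Q W
       = (\<Sum>y\<in>UNIV. out_dist Q W y * ln (out_dist Q W y / out_dist P W y))"
proof -
  define p where "p = out_dist P W"
  define q where "q = out_dist Q W"
  have Wnn: "\<And>x y. 0 \<le> W x y" using ch by (auto simp: is_channel_def is_dist_def)
  have Qnn: "\<forall>x. 0 \<le> Q x" using Q by (auto simp: is_dist_def)
  have Pnn: "\<forall>x. 0 \<le> P x" using Ppos by (auto simp: less_imp_le)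
  have per: "Q x * kl_div (W x) p - Q x * kl_div (W x) q = Q x * (\<Sum>y\<in>UNIV. W x y * ln (q y / p y))" for x
  proof (cases "Q x = 0")
    case True then show ?thesis by simp
  next
    case False
    then have Qx: "0 < Q x" using Qnn by (simp add: less_le)
    have "kl_div (W x) p - kl_div (W x) q = (\<Sum>y\<in>{y. 0 < W x y}. W x y * ln (q y / p y))"
      unfolding kl_div_def sum_subtractf[symmetric]
    proof (rule sum.cong[OF refl])
      fix y assume "y \<in> {y. 0 < W x y}"
      then have w: "0 < W x y" by simp
      have "0 < P x * W x y" using Ppos w by simp
      also have "\<dots> \<le> p y" unfolding p_def by (rule out_dist_ge[OF ch Pnn])
      finally have pp: "0 < p y" .
      have "0 < Q x * W x y" using Qx w by simp
      also have "\<dots> \<le> q y" unfolding q_def by (rule out_dist_ge[OF ch Qnn])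
      finally have qp: "0 < q y" .
      show "W x y * ln (W x y / p y) - W x y * ln (W x y / q y) = W x y * ln (q y / p y)"
        using pp qp w by (simp add: ln_div algebra_simps)
    qed
    also have "\<dots> = (\<Sum>y\<in>UNIV. W x y * ln (q y / p y))"
      by (rule sum.mono_neutral_left) (use Wnn in \<open>auto simp: not_less le_less\<close>)
    finally show ?thesis by (simp add: right_diff_distrib[symmetric])
  qed
  have "(\<Sum>x\<in>UNIV. Q x * kl_div (W x) p) - mutual_info Q W
      = (\<Sum>x\<in>UNIV. Q x * (\<Sum>y\<in>UNIV. W x y * ln (q y / p y)))"
    unfolding mutual_info_def q_def[symmetric] sum_subtractf[symmetric] using per by simp
  also have "\<dots> = (\<Sum>y\<in>UNIV. \<Sum>x\<in>UNIV. Q x * W x y * ln (q y / p y))"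
    by (subst sum.swap) (simp add: sum_distrib_left mult.assoc)
  also have "\<dots> = (\<Sum>y\<in>UNIV. q y * ln (q y / p y))"
    unfolding q_def out_dist_def by (simp add: sum_distrib_right)
  finally show ?thesis unfolding p_def q_def .
qed

lemma term_upper:
  fixes q p :: real assumes "0 \<le> q" "0 < p"
  shows "q * ln (q / p) \<le> (q - p)^2 / p + (q - p)"
proof (cases "q = 0")
  case True then show ?thesis using assms by (simp add: power2_eq_square)
next
  case False
  then have q: "0 < q" using assms by simp
  have "ln (q/p) \<le> q/p - 1" using q assms by (intro ln_le_minus_one) simp
  then have "q * ln (q/p) \<le> q * (q/p - 1)" using q by (simp add: mult_left_mono)
  also have "\<dots> = (q - p)^2 / p + (q - p)" using assms by (simp add: field_simps power2_eq_square)
  finally show ?thesis .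
qed

lemma term_lower:
  fixes q p :: real assumes "0 \<le> q" "0 < p"
  shows "q - p \<le> q * ln (q / p)"
proof (cases "q = 0")
  case True then show ?thesis using assms by simp
next
  case False
  then have q: "0 < q" using assms by simp
  have "ln (p/q) \<le> p/q - 1" using q assms by (intro ln_le_minus_one) simp
  moreover have "ln (p/q) = - ln (q/p)" using q assms by (simp add: ln_div)
  ultimately have "1 - p/q \<le> ln (q/p)" by simp
  then have "q * (1 - p/q) \<le> q * ln (q/p)" using q by (simp add: mult_left_mono)
  moreover have "q * (1 - p/q) = q - p" using q by (simp add: field_simps)
  ultimately show ?thesis by simp
qed


lemma out_dist_sum:
  assumes "is_channel W" "is_dist Q"
  shows "(\<Sum>y\<in>UNIV. out_dist Q W y) = 1"
proof -
  have "(\<Sum>y\<in>UNIV. out_dist Q W y) = (\<Sum>x\<in>UNIV. Q x * (\<Sum>y\<in>UNIV. W x y))"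
    unfolding out_dist_def by (subst sum.swap) (simp add: sum_distrib_left)
  also have "\<dots> = 1" using assms by (simp add: is_channel_def is_dist_def)
  finally show ?thesis .
qed

lemma out_dist_zero:
  assumes ch: "is_channel W" and Ppos: "\<forall>x. 0 < P x" and z: "out_dist P W y = 0"
  shows "out_dist Q W y = 0"
proof -
  have "\<forall>x. P x * W x y = 0"
  proof
    fix x
    have "\<forall>x\<in>UNIV. 0 \<le> P x * W x y" using ch Ppos by (auto simp: is_channel_def is_dist_def less_imp_le)
    then show "P x * W x y = 0" using z unfolding out_dist_def by (simp add: sum_nonneg_eq_0_iff)
  qed
  then have "\<forall>x. W x y = 0" using Ppos by (metis less_irrefl mult_eq_0_iff)
  then show ?thesis by (simp add: out_dist_def)
qed

lemma term_upper':
  fixes q p :: real assumes "0 \<le> q" "0 \<le> p" "p = 0 \<longrightarrow> q = 0"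
  shows "q * ln (q / p) \<le> (q - p)^2 / p + (q - p)"
  using term_upper[of q p] assms by (cases "p = 0") auto

lemma term_lower':
  fixes q p :: real assumes "0 \<le> q" "0 \<le> p" "p = 0 \<longrightarrow> q = 0"
  shows "q - p \<le> q * ln (q / p)"
  using term_lower[of q p] assms by (cases "p = 0") auto

lemma UB:
  assumes ch: "is_channel W" and P: "is_dist P" and Ppos: "\<forall>x. 0 < P x" and Q: "is_dist Q"
  shows "mutual_info Q W \<le> (\<Sum>x\<in>UNIV. Q x * kl_div (W x) (out_dist P W))"
proof -
  have Qnn: "\<forall>x. 0 \<le> Q x" using Q by (auto simp: is_dist_def)
  have Pnn: "\<forall>x. 0 \<le> P x" using Ppos by (auto simp: less_imp_le)
  have "0 = (\<Sum>y\<in>UNIV. out_dist Q W y - out_dist P W y)"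
    using out_dist_sum[OF ch Q] out_dist_sum[OF ch P] by (simp add: sum_subtractf)
  also have "\<dots> \<le> (\<Sum>y\<in>UNIV. out_dist Q W y * ln (out_dist Q W y / out_dist P W y))"
    by (intro sum_mono term_lower' out_dist_nonneg[OF ch] Qnn Pnn impI) (rule out_dist_zero[OF ch Ppos])
  finally show ?thesis using gibbs_identity[OF ch P Ppos Q] by simp
qed

definition Kc :: "('a::finite \<Rightarrow> real) \<Rightarrow> ('a \<Rightarrow> 'b::finite \<Rightarrow> real) \<Rightarrow> ('a \<Rightarrow> real) \<Rightarrow> real" where
  "Kc P W v = (\<Sum>y\<in>UNIV. (\<Sum>x\<in>UNIV. v x * W x y)^2 / out_dist P W y)"

lemma LB:
  assumes ch: "is_channel W" and P: "is_dist P" and Ppos: "\<forall>x. 0 < P x"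
    and v: "(\<Sum>x\<in>UNIV. v x) = 0" and Q: "is_dist (\<lambda>x. P x + t * v x)"
  shows "mutual_info P W + t * dI P W v - t^2 * Kc P W v \<le> mutual_info (\<lambda>x. P x + t * v x) W"
proof -
  define Q where "Q = (\<lambda>x. P x + t * v x)"
  have Qd: "is_dist Q" using Q by (simp add: Q_def)
  have Qnn: "\<forall>x. 0 \<le> Q x" using Qd by (auto simp: is_dist_def)
  have Pnn: "\<forall>x. 0 \<le> P x" using Ppos by (auto simp: less_imp_le)
  have diff: "out_dist Q W y - out_dist P W y = t * (\<Sum>x\<in>UNIV. v x * W x y)" for y
    unfolding out_dist_def Q_def by (simp add: sum_subtractf[symmetric] sum_distrib_left algebra_simps)
  have "(\<Sum>y\<in>UNIV. out_dist Q W y * ln (out_dist Q W y / out_dist P W y))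
      \<le> (\<Sum>y\<in>UNIV. (out_dist Q W y - out_dist P W y)^2 / out_dist P W y + (out_dist Q W y - out_dist P W y))"
    by (intro sum_mono term_upper' out_dist_nonneg[OF ch] Qnn Pnn impI) (rule out_dist_zero[OF ch Ppos])
  also have "\<dots> = (\<Sum>y\<in>UNIV. (out_dist Q W y - out_dist P W y)^2 / out_dist P W y) + (\<Sum>y\<in>UNIV. out_dist Q W y - out_dist P W y)"
    by (rule sum.distrib)
  also have "(\<Sum>y\<in>UNIV. out_dist Q W y - out_dist P W y) = 0"
    using out_dist_sum[OF ch Qd] out_dist_sum[OF ch P] by (simp add: sum_subtractf)
  also have "(\<Sum>y\<in>UNIV. (out_dist Q W y - out_dist P W y)^2 / out_dist P W y) = (\<Sum>y\<in>UNIV. t^2 * ((\<Sum>x\<in>UNIV. v x * W x y)^2 / out_dist P W y))"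
    by (rule sum.cong[OF refl]) (simp only: diff power_mult_distrib times_divide_eq_right)
  also have "\<dots> = t^2 * Kc P W v" unfolding Kc_def by (simp add: sum_distrib_left)
  finally have D: "(\<Sum>y\<in>UNIV. out_dist Q W y * ln (out_dist Q W y / out_dist P W y)) \<le> t^2 * Kc P W v" by simp
  have S: "(\<Sum>x\<in>UNIV. Q x * kl_div (W x) (out_dist P W)) = mutual_info P W + t * dI P W v"
    unfolding Q_def mutual_info_def dI_def by (simp add: algebra_simps sum.distrib sum_distrib_left)
  show ?thesis using gibbs_identity[OF ch P Ppos Qd] D S unfolding Q_def by simp
qed

lemma ev_dist:
  assumes P: "is_dist P" and Ppos: "\<forall>x. 0 < P x" and v: "(\<Sum>x\<in>UNIV. v x) = 0"
  shows "eventually (\<lambda>t. is_dist (\<lambda>x. P x + t * v x)) (at_right (0::real))"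
proof -
  have "eventually (\<lambda>t. \<forall>x. 0 < P x + t * v x) (at_right (0::real))"
  proof (rule eventually_all_finite)
    fix x
    have "((\<lambda>t. P x + t * v x) \<longlongrightarrow> P x + 0 * v x) (at_right (0::real))"
      by (intro tendsto_intros)
    then show "eventually (\<lambda>t. 0 < P x + t * v x) (at_right (0::real))"
      using Ppos by (intro order_tendstoD(1)) auto
  qed
  then show ?thesis
  proof (rule eventually_mono)
    fix t assume "\<forall>x. 0 < P x + t * v x"
    moreover have "(\<Sum>x\<in>UNIV. P x + t * v x) = 1"
      using P v by (simp add: sum.distrib is_dist_def sum_distrib_left[symmetric])
    ultimately show "is_dist (\<lambda>x. P x + t * v x)" by (auto simp: is_dist_def less_imp_le)
  qed
qed

lemma ev_LB:
  assumes ch: "is_channel W" and P: "is_dist P" and Ppos: "\<forall>x. 0 < P x" and v: "(\<Sum>x\<in>UNIV. v x) = 0"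
  shows "eventually (\<lambda>t. is_dist (\<lambda>x. P x + t * v x) \<and>
     mutual_info P W + t * dI P W v - t^2 * Kc P W v \<le> mutual_info (\<lambda>x. P x + t * v x) W) (at_right (0::real))"
  using ev_dist[OF P Ppos v] by (rule eventually_mono) (use LB[OF ch P Ppos v] in blast)

lemma ev_gt:
  assumes ch: "is_channel W" and P: "is_dist P" and Ppos: "\<forall>x. 0 < P x" and v: "(\<Sum>x\<in>UNIV. v x) = 0"
    and c: "c < mutual_info P W"
  shows "eventually (\<lambda>t. is_dist (\<lambda>x. P x + t * v x) \<and> c < mutual_info (\<lambda>x. P x + t * v x) W) (at_right (0::real))"
proof -
  have "((\<lambda>t. mutual_info P W + t * dI P W v - t^2 * Kc P W v) \<longlongrightarrow>
      mutual_info P W + 0 * dI P W v - 0^2 * Kc P W v) (at_right (0::real))"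
    by (intro tendsto_intros)
  then have "eventually (\<lambda>t. c < mutual_info P W + t * dI P W v - t^2 * Kc P W v) (at_right (0::real))"
    using c by (intro order_tendstoD(1)) auto
  with ev_LB[OF ch P Ppos v] show ?thesis
    by eventually_elim auto
qed

lemma ev_improve:
  assumes ch: "is_channel W" and P: "is_dist P" and Ppos: "\<forall>x. 0 < P x" and v: "(\<Sum>x\<in>UNIV. v x) = 0"
    and d: "0 < dI P W v"
  shows "eventually (\<lambda>t. is_dist (\<lambda>x. P x + t * v x) \<and> mutual_info P W < mutual_info (\<lambda>x. P x + t * v x) W) (at_right (0::real))"
proof -
  have "((\<lambda>t. dI P W v - t * Kc P W v) \<longlongrightarrow> dI P W v - 0 * Kc P W v) (at_right (0::real))"
    by (intro tendsto_intros)
  then have "eventually (\<lambda>t. 0 < dI P W v - t * Kc P W v) (at_right (0::real))"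
    using d by (intro order_tendstoD(1)) auto
  moreover have "eventually (\<lambda>t. 0 < t) (at_right (0::real))" by (rule eventually_at_right_less)
  ultimately have "eventually (\<lambda>t. mutual_info P W < mutual_info P W + t * dI P W v - t^2 * Kc P W v) (at_right (0::real))"
  proof eventually_elim
    case (elim t)
    then have "0 < t * (dI P W v - t * Kc P W v)" by simp
    then show ?case by (simp add: algebra_simps power2_eq_square)
  qed
  with ev_LB[OF ch P Ppos v] show ?thesis
    by eventually_elim auto
qed

lemma lin_alg:
  fixes f1 f2 :: "('a::finite \<Rightarrow> real) \<Rightarrow> real"
  assumes lin1: "\<And>a b v w. f1 (\<lambda>x. a * v x + b * w x) = a * f1 v + b * f1 w"
    and lin2: "\<And>a b v w. f2 (\<lambda>x. a * v x + b * w x) = a * f2 v + b * f2 w"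
    and nob: "\<And>v. (\<Sum>x\<in>UNIV. v x) = 0 \<Longrightarrow> \<not> (0 < f1 v \<and> 0 < f2 v)"
    and nz1: "\<exists>u. (\<Sum>x\<in>UNIV. u x) = 0 \<and> f1 u \<noteq> 0"
    and nz2: "\<exists>u. (\<Sum>x\<in>UNIV. u x) = 0 \<and> f2 u \<noteq> 0"
  shows "\<exists>!\<eta>::real. 0 < \<eta> \<and> \<eta> < 1 \<and>
           (\<forall>v::'a \<Rightarrow> real. (\<Sum>x\<in>UNIV. v x) = 0 \<longrightarrow> \<eta> * f1 v + (1 - \<eta>) * f2 v = 0)"
proof -
  have sumlin: "(\<Sum>x\<in>UNIV. a * v x + b * w x) = a * (\<Sum>x\<in>UNIV. v x) + b * (\<Sum>x\<in>UNIV. w x)"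
    for a b :: real and v w :: "'a \<Rightarrow> real"
    by (simp add: sum.distrib sum_distrib_left)
  have sc1: "f1 (\<lambda>x. a * v x) = a * f1 v" for a v using lin1[of a v 0 v] by simp
  have sc2: "f2 (\<lambda>x. a * v x) = a * f2 v" for a v using lin2[of a v 0 v] by simp
  obtain u0 where u0: "(\<Sum>x\<in>UNIV. u0 x) = 0" "f1 u0 \<noteq> 0" using nz1 by blast
  define u where "u = (\<lambda>x. (1 / f1 u0) * u0 x)"
  have us: "(\<Sum>x\<in>UNIV. u x) = 0" unfolding u_def using u0 by (simp add: sum_divide_distrib[symmetric])
  have u1: "f1 u = 1" unfolding u_def sc1 using u0 by simp
  define l where "l = f2 u"
  have lneg: "l < 0"
  proof (rule ccontr)
    assume "\<not> l < 0"
    then have l0: "0 \<le> l" by simp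
    obtain w0 where w0: "(\<Sum>x\<in>UNIV. w0 x) = 0" "f2 w0 \<noteq> 0" using nz2 by blast
    define sg where "sg = (if 0 < f2 w0 then 1 else -1::real)"
    define K where "K = \<bar>sg * f1 w0\<bar> + 1"
    define z where "z = (\<lambda>x. sg * w0 x + K * u x)"
    have "(\<Sum>x\<in>UNIV. z x) = 0" unfolding z_def sumlin using w0 us by simp
    moreover have "0 < f1 z" unfolding z_def lin1 u1 K_def by (simp add: abs_le_iff[symmetric])
    moreover have "0 < f2 z"
    proof -
      have "0 < sg * f2 w0" using w0 by (auto simp: sg_def)
      moreover have "0 \<le> K * l" using l0 by (simp add: K_def)
      ultimately show ?thesis unfolding z_def lin2 l_def[symmetric] by linarith
    qed
    ultimately show False using nob by blast
  qed
  have propl: "f2 w = l * f1 w" if ws: "(\<Sum>x\<in>UNIV. w x) = 0" for w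
  proof (rule ccontr)
    assume ne: "f2 w \<noteq> l * f1 w"
    define w' where "w' = (\<lambda>x. 1 * w x + (- f1 w) * u x)"
    have w's: "(\<Sum>x\<in>UNIV. w' x) = 0" unfolding w'_def sumlin using ws us by simp
    have f1w': "f1 w' = 0" unfolding w'_def lin1 u1 by simp
    have f2w': "f2 w' = f2 w - f1 w * l" unfolding w'_def lin2 l_def by simp
    define \<delta> where "\<delta> = f2 w'"
    have dne: "\<delta> \<noteq> 0" using ne f2w' by (simp add: \<delta>_def algebra_simps)
    define sg where "sg = (if 0 < \<delta> then 1 else -1::real)"
    have sgd: "sg * \<delta> = \<bar>\<delta>\<bar>" by (simp add: sg_def)
    define e where "e = \<bar>\<delta>\<bar> / (2 * (- l))"
    have epos: "0 < e" using dne lneg unfolding e_def by (intro divide_pos_pos) auto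
    have el: "e * l = - \<bar>\<delta>\<bar> / 2" using lneg by (simp add: e_def field_simps)
    define z where "z = (\<lambda>x. sg * w' x + e * u x)"
    have "(\<Sum>x\<in>UNIV. z x) = 0" unfolding z_def sumlin using w's us by simp
    moreover have "0 < f1 z" unfolding z_def lin1 u1 f1w' using epos by simp
    moreover have "0 < f2 z" unfolding z_def lin2 l_def[symmetric] \<delta>_def[symmetric] sgd el
      using dne by simp
    ultimately show False using nob by blast
  qed
  define \<eta> where "\<eta> = - l / (1 - l)"
  have works: "0 < \<eta> \<and> \<eta> < 1 \<and> (\<forall>v::'a \<Rightarrow> real. (\<Sum>x\<in>UNIV. v x) = 0 \<longrightarrow> \<eta> * f1 v + (1 - \<eta>) * f2 v = 0)"
  proof (intro conjI allI impI)
    show "0 < \<eta>" using lneg unfolding \<eta>_def by (intro divide_pos_pos) auto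
    show "\<eta> < 1" using lneg unfolding \<eta>_def by (subst divide_less_eq) auto
    fix v :: "'a \<Rightarrow> real" assume "(\<Sum>x\<in>UNIV. v x) = 0"
    then have "f2 v = l * f1 v" by (rule propl)
    then show "\<eta> * f1 v + (1 - \<eta>) * f2 v = 0" using lneg
      by (simp add: \<eta>_def field_simps)
  qed
  show ?thesis
  proof (rule ex1I[of _ \<eta>])
    show "0 < \<eta> \<and> \<eta> < 1 \<and> (\<forall>v::'a \<Rightarrow> real. (\<Sum>x\<in>UNIV. v x) = 0 \<longrightarrow> \<eta> * f1 v + (1 - \<eta>) * f2 v = 0)"
      by (rule works)
    fix \<eta>' assume "0 < \<eta>' \<and> \<eta>' < 1 \<and> (\<forall>v::'a \<Rightarrow> real. (\<Sum>x\<in>UNIV. v x) = 0 \<longrightarrow> \<eta>' * f1 v + (1 - \<eta>') * f2 v = 0)"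
    then have "\<eta>' * f1 u + (1 - \<eta>') * f2 u = 0" using us by blast
    then have "\<eta>' + (1 - \<eta>') * l = 0" using u1 by (simp add: l_def)
    then show "\<eta>' = \<eta>" using lneg by (simp add: \<eta>_def field_simps)
  qed
qed

lemma dI_lin: "dI P W (\<lambda>x. a * v x + b * w x) = a * dI P W v + b * dI P W w"
  unfolding dI_def by (simp add: algebra_simps sum.distrib sum_distrib_left)

lemma sum_ind_univ: "(\<Sum>z\<in>(UNIV::'a::finite set). (if z = x then f z else (0::real))) = f x"
  by (subst sum.delta) auto

lemma cap_le:
  fixes W :: "'a::finite \<Rightarrow> 'b::finite \<Rightarrow> real"
  assumes ch: "is_channel W" and P: "is_dist P" and Ppos: "\<forall>x. 0 < P x"
    and z: "\<forall>v. (\<Sum>x\<in>UNIV. v x) = 0 \<longrightarrow> dI P W v = 0"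
  shows "capacity W \<le> mutual_info P W"
proof -
  define a where "a x = kl_div (W x) (out_dist P W)" for x
  obtain x0 :: 'a where True by blast
  have const: "a x = a x0" for x
  proof -
    define v where "v = (\<lambda>z. (if z = x then 1 else 0) - (if z = x0 then 1 else (0::real)))"
    have "(\<Sum>z\<in>UNIV. v z) = (\<Sum>z\<in>UNIV. (if z = x then 1 else 0)) - (\<Sum>z\<in>UNIV. (if z = x0 then 1 else (0::real)))"
      unfolding v_def by (rule sum_subtractf)
    also have "\<dots> = 0" using sum_ind_univ[of x "\<lambda>_. 1"] sum_ind_univ[of x0 "\<lambda>_. 1"] by simp
    finally have "(\<Sum>z\<in>UNIV. v z) = 0" .
    then have "dI P W v = 0" using z by simp
    moreover have "dI P W v = a x - a x0"
    proof -
      have "dI P W v = (\<Sum>z\<in>UNIV. (if z = x then a z else 0) - (if z = x0 then a z else 0))"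
        unfolding dI_def a_def[symmetric] by (rule sum.cong[OF refl]) (simp add: v_def)
      also have "\<dots> = a x - a x0" by (simp only: sum_subtractf sum_ind_univ)
      finally show ?thesis .
    qed
    ultimately show ?thesis by simp
  qed
  have I: "mutual_info P W = a x0"
  proof -
    have "mutual_info P W = (\<Sum>x\<in>UNIV. P x * a x0)"
      unfolding mutual_info_def a_def[symmetric] by (rule sum.cong[OF refl]) (subst const, rule refl)
    also have "\<dots> = a x0" using P by (simp add: is_dist_def sum_distrib_right[symmetric])
    finally show ?thesis .
  qed
  show ?thesis unfolding capacity_def
  proof (rule cSUP_least)
    show "{Q. is_dist (Q::'a \<Rightarrow> real)} \<noteq> {}" using P by auto
    fix Q :: "'a \<Rightarrow> real" assume "Q \<in> {P. is_dist P}"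
    then have Q: "is_dist Q" by simp
    have "mutual_info Q W \<le> (\<Sum>x\<in>UNIV. Q x * a x)" unfolding a_def by (rule UB[OF ch P Ppos Q])
    also have "\<dots> = (\<Sum>x\<in>UNIV. Q x * a x0)" by (rule sum.cong[OF refl]) (subst const, rule refl)
    also have "\<dots> = a x0" using Q by (simp add: is_dist_def sum_distrib_right[symmetric])
    finally show "mutual_info Q W \<le> mutual_info P W" using I by simp
  qed
qed

lemma one_sided:
  assumes ch1: "is_channel W1" and ch2: "is_channel W2" and P: "is_dist P" and Ppos: "\<forall>x. 0 < P x"
    and Pmax: "\<forall>Q. is_dist Q \<longrightarrow>
        min (mutual_info Q W1) (mutual_info Q W2) \<le> min (mutual_info P W1) (mutual_info P W2)"
    and lt: "mutual_info P W2 < mutual_info P W1"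
  shows "capacity W2 \<le> mutual_info P W2"
proof (rule cap_le[OF ch2 P Ppos], intro allI impI)
  fix v :: "'a \<Rightarrow> real" assume vs: "(\<Sum>x\<in>UNIV. v x) = 0"
  show "dI P W2 v = 0"
  proof (rule ccontr)
    assume ne: "dI P W2 v \<noteq> 0"
    define sg where "sg = (if 0 < dI P W2 v then 1 else -1::real)"
    define w where "w = (\<lambda>x. sg * v x + 0 * v x)"
    have ws: "(\<Sum>x\<in>UNIV. w x) = 0" using vs by (simp add: w_def sum_distrib_left[symmetric])
    have "dI P W2 w = sg * dI P W2 v" unfolding w_def dI_lin by simp
    then have d: "0 < dI P W2 w" using ne by (auto simp: sg_def)
    have "eventually (\<lambda>t. (is_dist (\<lambda>x. P x + t * w x) \<and> mutual_info P W2 < mutual_info (\<lambda>x. P x + t * w x) W2)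
       \<and> (is_dist (\<lambda>x. P x + t * w x) \<and> mutual_info P W2 < mutual_info (\<lambda>x. P x + t * w x) W1)) (at_right (0::real))"
      using ev_improve[OF ch2 P Ppos ws d] ev_gt[OF ch1 P Ppos ws lt] by (rule eventually_conj)
    then have "\<exists>t. (is_dist (\<lambda>x. P x + t * w x) \<and> mutual_info P W2 < mutual_info (\<lambda>x. P x + t * w x) W2)
       \<and> (is_dist (\<lambda>x. P x + t * w x) \<and> mutual_info P W2 < mutual_info (\<lambda>x. P x + t * w x) W1)"
      by (rule eventually_happens'[OF trivial_limit_at_right_real])
    then obtain t where t: "is_dist (\<lambda>x. P x + t * w x)" "mutual_info P W2 < mutual_info (\<lambda>x. P x + t * w x) W2"
       "mutual_info P W2 < mutual_info (\<lambda>x. P x + t * w x) W1"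
      by (elim exE conjE)
    have "min (mutual_info (\<lambda>x. P x + t * w x) W1) (mutual_info (\<lambda>x. P x + t * w x) W2) \<le> min (mutual_info P W1) (mutual_info P W2)"
      using Pmax t(1) by blast
    then show False using t lt by linarith
  qed
qed

theorem lemma1:
  fixes W1 W2 :: "'a::finite \<Rightarrow> 'b::finite \<Rightarrow> real"
    and Pstar :: "'a \<Rightarrow> real"
  assumes ch1: "is_channel W1" and ch2: "is_channel W2"
    and Pstar_dist: "is_dist Pstar"
    and Pstar_max: "\<forall>P. is_dist P \<longrightarrow>
        min (mutual_info P W1) (mutual_info P W2) \<le> min (mutual_info Pstar W1) (mutual_info Pstar W2)"
    and Pstar_unique: "\<forall>P. is_dist P \<and> (\<forall>Q. is_dist Q \<longrightarrow>
        min (mutual_info Q W1) (mutual_info Q W2) \<le> min (mutual_info P W1) (mutual_info P W2))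
        \<longrightarrow> P = Pstar"
    and Pstar_pos: "\<forall>x. 0 < Pstar x"
    and V1_pos: "0 < dispersion Pstar W1" and V2_pos: "0 < dispersion Pstar W2"
    and C1_gt: "capacity W1 > compound_capacity W1 W2"
    and C2_gt: "capacity W2 > compound_capacity W1 W2"
  shows "\<exists>!\<eta>::real. 0 < \<eta> \<and> \<eta> < 1 \<and>
           (\<forall>v::'a \<Rightarrow> real. (\<Sum>x\<in>UNIV. v x) = 0 \<longrightarrow>
              \<eta> * dI Pstar W1 v + (1 - \<eta>) * dI Pstar W2 v = 0)"
  proof -
  define M where "M P = min (mutual_info P W1) (mutual_info P W2)" for P
  have CC: "compound_capacity W1 W2 = M Pstar"
  proof (rule antisym)
    have ne: "{Q. is_dist (Q::'a \<Rightarrow> real)} \<noteq> {}" using Pstar_dist by auto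
    have ub: "\<And>P. P \<in> {P. is_dist P} \<Longrightarrow> M P \<le> M Pstar"
      unfolding M_def using Pstar_max by simp
    show "compound_capacity W1 W2 \<le> M Pstar" unfolding compound_capacity_def M_def[symmetric]
      by (rule cSUP_least[OF ne ub])
    have bdd: "bdd_above (M ` {P. is_dist P})" using ub by (intro bdd_aboveI2)
    show "M Pstar \<le> compound_capacity W1 W2" unfolding compound_capacity_def M_def[symmetric]
      by (rule cSUP_upper[OF _ bdd]) (simp add: Pstar_dist)
  qed
  have eq: "mutual_info Pstar W1 = mutual_info Pstar W2"
  proof (rule ccontr)
    assume ne: "mutual_info Pstar W1 \<noteq> mutual_info Pstar W2"
    show False
    proof (cases "mutual_info Pstar W2 < mutual_info Pstar W1")
      case True
      have "capacity W2 \<le> mutual_info Pstar W2"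
        by (rule one_sided[OF ch1 ch2 Pstar_dist Pstar_pos Pstar_max True])
      then show False using C2_gt CC True by (simp add: M_def)
    next
      case False
      then have lt: "mutual_info Pstar W1 < mutual_info Pstar W2" using ne by simp
      have "capacity W1 \<le> mutual_info Pstar W1"
        by (rule one_sided[OF ch2 ch1 Pstar_dist Pstar_pos _ lt]) (use Pstar_max in \<open>simp add: min.commute\<close>)
      then show False using C1_gt CC lt by (simp add: M_def)
    qed
  qed
  have nob: "\<not> (0 < dI Pstar W1 v \<and> 0 < dI Pstar W2 v)" if vs: "(\<Sum>x\<in>UNIV. v x) = 0" for v
  proof
    assume "0 < dI Pstar W1 v \<and> 0 < dI Pstar W2 v"
    then have d1: "0 < dI Pstar W1 v" and d2: "0 < dI Pstar W2 v" by auto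
    have "eventually (\<lambda>t. (is_dist (\<lambda>x. Pstar x + t * v x) \<and> mutual_info Pstar W1 < mutual_info (\<lambda>x. Pstar x + t * v x) W1)
       \<and> (is_dist (\<lambda>x. Pstar x + t * v x) \<and> mutual_info Pstar W2 < mutual_info (\<lambda>x. Pstar x + t * v x) W2)) (at_right (0::real))"
      using ev_improve[OF ch1 Pstar_dist Pstar_pos vs d1] ev_improve[OF ch2 Pstar_dist Pstar_pos vs d2]
      by (rule eventually_conj)
    then have "\<exists>t. (is_dist (\<lambda>x. Pstar x + t * v x) \<and> mutual_info Pstar W1 < mutual_info (\<lambda>x. Pstar x + t * v x) W1)
       \<and> (is_dist (\<lambda>x. Pstar x + t * v x) \<and> mutual_info Pstar W2 < mutual_info (\<lambda>x. Pstar x + t * v x) W2)"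
      by (rule eventually_happens'[OF trivial_limit_at_right_real])
    then obtain t where t: "is_dist (\<lambda>x. Pstar x + t * v x)"
      "mutual_info Pstar W1 < mutual_info (\<lambda>x. Pstar x + t * v x) W1"
      "mutual_info Pstar W2 < mutual_info (\<lambda>x. Pstar x + t * v x) W2"
      by (elim exE conjE)
    have "min (mutual_info (\<lambda>x. Pstar x + t * v x) W1) (mutual_info (\<lambda>x. Pstar x + t * v x) W2)
        \<le> min (mutual_info Pstar W1) (mutual_info Pstar W2)"
      using Pstar_max t(1) by blast
    then show False using t eq by linarith
  qed
  have nz1: "\<exists>u. (\<Sum>x\<in>UNIV. u x) = 0 \<and> dI Pstar W1 u \<noteq> 0"
  proof (rule ccontr)
    assume "\<not> ?thesis"
    then have "\<forall>v. (\<Sum>x\<in>UNIV. v x) = 0 \<longrightarrow> dI Pstar W1 v = 0" by blast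
    then have "capacity W1 \<le> mutual_info Pstar W1" by (rule cap_le[OF ch1 Pstar_dist Pstar_pos])
    then show False using C1_gt CC eq by (simp add: M_def)
  qed
  have nz2: "\<exists>u. (\<Sum>x\<in>UNIV. u x) = 0 \<and> dI Pstar W2 u \<noteq> 0"
  proof (rule ccontr)
    assume "\<not> ?thesis"
    then have "\<forall>v. (\<Sum>x\<in>UNIV. v x) = 0 \<longrightarrow> dI Pstar W2 v = 0" by blast
    then have "capacity W2 \<le> mutual_info Pstar W2" by (rule cap_le[OF ch2 Pstar_dist Pstar_pos])
    then show False using C2_gt CC eq by (simp add: M_def)
  qed
  show ?thesis
    by (rule lin_alg[of "dI Pstar W1" "dI Pstar W2", OF dI_lin dI_lin nob nz1 nz2])
qed

end
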